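(* Assume the setting of the context, with $\|\widehat B^{k,1}\|_F\le B$ and $\widehat\ell_1=\ell_1(1+B)^2$. Fix $\widehat x^k$, $\delta_k\in(0,\delta_{\max}]$ and constants $\kappa_{dcp},\kappa_{ef},\kappa_{ed}>0$. Let $y^{i,*}:\mathcal{B}(\widehat x^k,\delta_k)\to\mathcal{Y}$ satisfy $$\|y^{i,*}(x)-y^{k,*}(x)\|\le\min\Big\{\frac{\kappa_{ed}\delta_k}{\widehat\ell_1},\ \frac{\kappa_{ef}\delta_k^2}{L_1}\Big\}\quad\forall x\in\mathcal{B}(\widehat x^k,\delta_k),$$ let $g_k=\nabla_x\mathcal{L}^k(\widehat x^k,y^{i,*}(\widehat x^k))$, and let $s^k$ with $\|s^k\|\le\delta_k$ satisfy $\mathcal{L}^k(\widehat x^k,y^{i,*}(\widehat x^k))-\mathcal{L}^k(\widehat x^k+s^k,y^{i,*}(\widehat x^k+s^k))\ge\kappa_{dcp}\|g_k\|\min\{\delta_k,1\}$. Assume $|\Phi(x)-\Phi^k(x)|\le\kappa_{ef}\delta_k^2$ for all $x\in\mathcal{B}(\widehat x^k,\delta_k)$ and $\|\nabla\Phi(\widehat x^k)\|-\|\nabla\Phi^k(\widehat x^k)\|\le\kappa_{ed}\delta_k$. If $$\delta_k\le\frac{\|\nabla\Phi(\widehat x^k)\|}{\big(\frac{8\kappa_{ef}}{\kappa_{dcp}}+2\kappa_{ed}\big)\max\{1,\delta_{\max}\}},$$ then $$\Phi(\widehat x^k+s^k)-\Phi(\widehat x^k)\le-C_1\|\nabla\Phi(\widehat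 x^k)\|\delta_k,\qquad C_1=\frac{4\kappa_{dcp}\kappa_{ef}}{(8\kappa_{ef}+2\kappa_{ed}\kappa_{dcp})\max\{\delta_{\max},1\}}.$$
   Context: Standing assumptions: $l:\mathbb{R}^n\times\mathbb{R}^m\times\mathbb{R}^d\to\mathbb{R}$ is $\ell_1$-smooth and $L_1$-Lipschitz; $\psi:\mathbb{R}^n\to\mathbb{R}^d$ is twice differentiable, $\ell_0$-smooth and $L_0$-Lipschitz; $\mathcal{Y}\subset\mathbb{R}^m$ is nonempty, closed, convex, bounded; $l(x,\cdot,z)$ is $\mu$-strongly concave on $\mathcal{Y}$; $\tilde\epsilon$ is a random vector in $\mathbb{R}^d$ with compact support and zero mean. $\mathcal{L}(x,y)=\mathbb{E}_{\tilde\epsilon}[l(x,y,\psi(x)+\tilde\epsilon)]$, $\Phi(x)=\max_{y\in\mathcal{Y}}\mathcal{L}(x,y)$ (differentiable). $\mathcal{B}(x,\delta)=\{z:\|z-x\|\le\delta\}$. Local model at iteration $k$: data $x^i\in\mathcal{B}(\widehat x^k,\delta_k)$, $\omega^i=\psi(x^i)+\epsilon^i$ ($i=1,\dots,N_k$), least-squares affine coefficients $\widehat B^{k,1},\widehat B^{k,0}$, residuals $e^{k,i}=\omega^i-(\widehat B^{k,1})^\top x^i-(\widehat B^{k,0})^\top$, $m_k(x,e)=(\widehat B^{k,1})^\top x+(\widehat B^{k,0})^\top+e$, $\mathcal{L}^k(x,y)=\frac1{N_k}\sum_i l(x,y,m_k(x,e^{k,i}))$, $\Phi^k(x)=\max_{y\in\mathcal{Y}}\mathcal{L}^k(x,y)$,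 $y^{k,*}(x)=\arg\max_{y\in\mathcal{Y}}\mathcal{L}^k(x,y)$. (In the paper the two accuracy conditions on $\Phi-\Phi^k$ form an event holding with probability at least $\alpha$ for large enough samples.) *)

theory Defs
  imports "HOL-Probability.Probability"
begin

definition smooth_fun :: "real \<Rightarrow> ('a::euclidean_space \<Rightarrow> 'b::real_normed_vector) \<Rightarrow> bool" where
  "smooth_fun C f \<longleftrightarrow> (\<exists>D. (\<forall>z. (f has_derivative blinfun_apply (D z)) (at z)) \<and> C-lipschitz_on UNIV D)"

definition twice_diff :: "('a::euclidean_space \<Rightarrow> 'b::real_normed_vector) \<Rightarrow> bool" where
  "twice_diff f \<longleftrightarrow> (\<exists>D. (\<forall>z. (f has_derivative blinfun_apply (D z)) (at z)) \<and> (\<forall>z. D differentiable (at z)))"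

text \<open>Gradient of a real-valued function (meaningful where it is differentiable).\<close>
definition grad :: "('a::real_inner \<Rightarrow> real) \<Rightarrow> 'a \<Rightarrow> 'a" where
  "grad f x = (THE g. (f has_derivative (\<lambda>h. g \<bullet> h)) (at x))"

definition strongly_concave_on :: "real \<Rightarrow> 'a::real_normed_vector set \<Rightarrow> ('a \<Rightarrow> real) \<Rightarrow> bool" where
  "strongly_concave_on \<mu> S f \<longleftrightarrow> (\<forall>u\<in>S. \<forall>v\<in>S. \<forall>t\<in>{0..1}.
     f (t *\<^sub>R u + (1 - t) *\<^sub>R v) \<ge> t * f u + (1 - t) * f v + \<mu> / 2 * t * (1 - t) * (norm (u - v))\<^sup>2)"

definition Lexp :: "('n \<Rightarrow> 'm \<Rightarrow> 'd::euclidean_space \<Rightarrow> real) \<Rightarrow> ('n \<Rightarrow> 'd) \<Rightarrow> 'd measure \<Rightarrow> 'n \<Rightarrow> 'm \<Rightarrow> real" where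
  "Lexp l \<psi> E x y = (\<integral>e. l x y (\<psi> x + e) \<partial>E)"

definition Phi_of :: "('n \<Rightarrow> 'm \<Rightarrow> real) \<Rightarrow> 'm set \<Rightarrow> 'n \<Rightarrow> real" where
  "Phi_of L Y x = (SUP y\<in>Y. L x y)"

text \<open>Local affine model m_k(x,e) = (B1)^T x + (B0)^T + e, with B1 an n x d matrix.\<close>
definition model :: "real^'d^'n \<Rightarrow> real^'d \<Rightarrow> real^'n \<Rightarrow> real^'d \<Rightarrow> real^'d" where
  "model B1 B0 x e = x v* B1 + B0 + e"

definition ls_obj :: "nat \<Rightarrow> (nat \<Rightarrow> real^'n) \<Rightarrow> (nat \<Rightarrow> real^'d) \<Rightarrow> real^'d^'n \<Rightarrow> real^'d \<Rightarrow> real" where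
  "ls_obj N xs ws B1 B0 = (\<Sum>i<N. (norm (ws i - xs i v* B1 - B0))\<^sup>2)"

definition Lk :: "(real^'n \<Rightarrow> 'm \<Rightarrow> real^'d \<Rightarrow> real) \<Rightarrow> nat \<Rightarrow> real^'d^'n \<Rightarrow> real^'d \<Rightarrow> (nat \<Rightarrow> real^'d) \<Rightarrow> real^'n \<Rightarrow> 'm \<Rightarrow> real" where
  "Lk l N B1 B0 es x y = (1 / real N) * (\<Sum>i<N. l x y (model B1 B0 x (es i)))"

definition argmax_on :: "('m \<Rightarrow> real) \<Rightarrow> 'm set \<Rightarrow> 'm" where
  "argmax_on f Y = (THE y. y \<in> Y \<and> (\<forall>y'\<in>Y. f y' \<le> f y))"

end

theory Submission
  imports Defs
begin

lemma vm_sum: "(h::real^'n) v* (A::real^'d^'n) = (\<Sum>i\<in>UNIV. h$i *\<^sub>R A$i)"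
  by (simp add: vec_eq_iff vector_matrix_mult_def sum_component)

lemma norm_vm: "norm ((h::real^'n) v* (A::real^'d^'n)) \<le> norm h * norm A"
proof -
  have "norm (h v* A) \<le> (\<Sum>i\<in>UNIV. \<bar>h$i\<bar> * norm (A$i))"
    unfolding vm_sum by (rule order_trans[OF norm_sum]) simp
  also have "\<dots> = inner (\<chi> i. \<bar>h$i\<bar>) (\<chi> i. norm (A$i))"
    by (simp add: inner_vec_def)
  also have "\<dots> \<le> norm (\<chi> i. \<bar>h$i\<bar>) * norm (\<chi> i. norm (A$i))"
    by (rule norm_cauchy_schwarz)
  also have "norm (\<chi> i. \<bar>h$i\<bar>) = norm h" by (simp add: norm_vec_def)
  also have "norm (\<chi> i. norm (A$i)) = norm A" by (simp add: norm_vec_def)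
  finally show ?thesis .
qed


definition Pmap :: "real^'d^'n \<Rightarrow> (real^'n) \<Rightarrow>\<^sub>L ((real^'n) \<times> (real^'m) \<times> (real^'d))" where
  "Pmap B1 = Blinfun (\<lambda>h. (h, 0, h v* B1))"

lemma bl_vm: "bounded_linear (\<lambda>h::real^'n. h v* (B1::real^'d^'n))"
proof -
  have "(\<lambda>h::real^'n. h v* B1) = (\<lambda>h. transpose B1 *v h)" by simp
  then show ?thesis using matrix_vector_mul_bounded_linear by metis
qed

lemma Pmap_apply:
  fixes B1 :: "real^'d^'n" and h :: "real^'n"
  shows "blinfun_apply (Pmap B1 :: (real^'n) \<Rightarrow>\<^sub>L ((real^'n) \<times> (real^'m) \<times> (real^'d))) h = (h, 0, h v* B1)"
proof -
  have "bounded_linear (\<lambda>h::real^'n. (h, 0::real^'m, h v* (B1::real^'d^'n)))"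
    using bl_vm[of B1] by (intro bounded_linear_Pair bounded_linear_ident bounded_linear_zero)
  then show ?thesis unfolding Pmap_def by (simp add: bounded_linear_Blinfun_apply)
qed

lemma norm_triple: "norm ((a, b, c)::('a::real_normed_vector \<times> 'b::real_normed_vector \<times> 'c::real_normed_vector)) \<le> norm a + norm b + norm c"
  using norm_Pair_le[of a "(b,c)"] norm_Pair_le[of b c] by simp

lemma norm_Pmap: "norm (Pmap B1 :: (real^'n) \<Rightarrow>\<^sub>L ((real^'n) \<times> (real^'m) \<times> (real^'d))) \<le> 1 + norm B1"
proof (rule norm_blinfun_bound)
  fix h :: "real^'n"
  have "norm ((h, 0::real^'m, h v* B1)) \<le> norm h + norm (0::real^'m) + norm (h v* B1)" by (rule norm_triple)
  also have "\<dots> \<le> norm h + 0 + norm h * norm B1" using norm_vm[of h B1] by simp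
  finally show "norm (blinfun_apply (Pmap B1 :: (real^'n) \<Rightarrow>\<^sub>L ((real^'n) \<times> (real^'m) \<times> (real^'d))) h) \<le> (1 + norm B1) * norm h"
    by (simp add: Pmap_apply algebra_simps)
qed simp

definition DLk :: "((real^'n) \<times> (real^'m) \<times> (real^'d) \<Rightarrow> ((real^'n) \<times> (real^'m) \<times> (real^'d)) \<Rightarrow>\<^sub>L real) \<Rightarrow> nat \<Rightarrow> real^'d^'n \<Rightarrow> real^'d \<Rightarrow> (nat \<Rightarrow> real^'d) \<Rightarrow> real^'n \<Rightarrow> real^'m \<Rightarrow> (real^'n) \<Rightarrow>\<^sub>L real" where
  "DLk D N B1 B0 es x y = (1 / real N) *\<^sub>R (\<Sum>i<N. D (x, y, model B1 B0 x (es i)) o\<^sub>L Pmap B1)"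

lemma DLk_deriv:
  assumes der: "\<And>z. ((\<lambda>(x, y, z). l x y z) has_derivative blinfun_apply (D z)) (at z)"
  shows "((\<lambda>u. Lk l N B1 B0 es u y) has_derivative blinfun_apply (DLk D N B1 B0 es x y)) (at x)"
proof -
  have inner: "((\<lambda>u. (u, y, model B1 B0 u e)) has_derivative blinfun_apply (Pmap B1)) (at x)" for e
  proof -
    have "((\<lambda>u. (u, y, u v* B1 + B0 + e)) has_derivative (\<lambda>h. (h, 0, h v* B1 + 0 + 0))) (at x)"
      by (intro has_derivative_Pair has_derivative_ident has_derivative_const has_derivative_add
          bounded_linear.has_derivative[OF bl_vm])
    then show ?thesis by (simp add: model_def Pmap_apply[abs_def])
  qed
  have comp: "((\<lambda>u. l u y (model B1 B0 u e)) has_derivative (\<lambda>h. D (x, y, model B1 B0 x e) (Pmap B1 h))) (at x)" for e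
    using diff_chain_at[OF inner[of e] der[of "(x, y, model B1 B0 x e)"]] by (simp add: o_def)
  have "((\<lambda>u. (1 / real N) * (\<Sum>i<N. l u y (model B1 B0 u (es i)))) has_derivative
      (\<lambda>h. (1 / real N) * (\<Sum>i<N. D (x, y, model B1 B0 x (es i)) (Pmap B1 h)))) (at x)"
    by (intro has_derivative_mult_right has_derivative_sum comp)
  moreover have "blinfun_apply (DLk D N B1 B0 es x y) = (\<lambda>h. (1 / real N) * (\<Sum>i<N. D (x, y, model B1 B0 x (es i)) (Pmap B1 h)))"
    by (rule ext) (simp add: DLk_def blinfun.bilinear_simps)
  ultimately show ?thesis by (simp add: Lk_def)
qed

lemma DLk_lip:
  fixes D :: "((real^'n) \<times> (real^'m) \<times> (real^'d) \<Rightarrow> ((real^'n) \<times> (real^'m) \<times> (real^'d)) \<Rightarrow>\<^sub>L real)"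
    and B1 :: "real^'d^'n" and B0 :: "real^'d" and x x' :: "real^'n" and y y' :: "real^'m"
  assumes lip: "C-lipschitz_on UNIV D" and N: "N > 0"
  shows "norm (DLk D N B1 B0 es x y - DLk D N B1 B0 es x' y') \<le> C * (1 + norm B1) * ((1 + norm B1) * norm (x - x') + norm (y - y'))"
proof -
  have C: "C \<ge> 0" using lip lipschitz_on_nonneg by blast
  let ?K = "C * (1 + norm B1) * ((1 + norm B1) * norm (x - x') + norm (y - y'))"
  have each: "norm ((D (x, y, model B1 B0 x e) - D (x', y', model B1 B0 x' e)) o\<^sub>L Pmap B1) \<le> ?K" for e
  proof -
    have "norm ((D (x, y, model B1 B0 x e) - D (x', y', model B1 B0 x' e)) o\<^sub>L Pmap B1)
        \<le> norm (D (x, y, model B1 B0 x e) - D (x', y', model B1 B0 x' e)) * norm (Pmap B1 :: (real^'n) \<Rightarrow>\<^sub>L ((real^'n) \<times> (real^'m) \<times> (real^'d)))"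
      by (rule norm_blinfun_compose)
    also have "\<dots> \<le> (C * norm ((x, y, model B1 B0 x e) - (x', y', model B1 B0 x' e))) * (1 + norm B1)"
    proof (rule mult_mono)
      show "norm (D (x, y, model B1 B0 x e) - D (x', y', model B1 B0 x' e)) \<le> C * norm ((x, y, model B1 B0 x e) - (x', y', model B1 B0 x' e))"
        using lipschitz_onD[OF lip, of "(x, y, model B1 B0 x e)" "(x', y', model B1 B0 x' e)"] by (simp add: dist_norm)
    qed (auto simp: norm_Pmap C)
    also have "\<dots> \<le> (C * ((1 + norm B1) * norm (x - x') + norm (y - y'))) * (1 + norm B1)"
    proof -
      have "norm ((x, y, model B1 B0 x e) - (x', y', model B1 B0 x' e)) = norm ((x - x', y - y', (x - x') v* B1))"
        by (simp add: model_def vector_matrix_mult_diff_distrib)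
      also have "\<dots> \<le> norm (x - x') + norm (y - y') + norm (x - x') * norm B1"
        using norm_triple[of "x - x'" "y - y'" "(x - x') v* B1"] norm_vm[of "x - x'" B1] by simp
      also have "\<dots> = (1 + norm B1) * norm (x - x') + norm (y - y')" by (simp add: algebra_simps)
      finally show ?thesis using C by (intro mult_right_mono mult_left_mono) auto
    qed
    finally show ?thesis by (simp add: mult_ac)
  qed
  have "DLk D N B1 B0 es x y - DLk D N B1 B0 es x' y' = (1 / real N) *\<^sub>R (\<Sum>i<N. (D (x, y, model B1 B0 x (es i)) - D (x', y', model B1 B0 x' (es i))) o\<^sub>L Pmap B1)"
    by (simp add: DLk_def scaleR_diff_right[symmetric] sum_subtractf[symmetric] bounded_bilinear.diff_left[OF bounded_bilinear_blinfun_compose])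
  also have "norm \<dots> \<le> (1 / real N) * (\<Sum>i<N. norm ((D (x, y, model B1 B0 x (es i)) - D (x', y', model B1 B0 x' (es i))) o\<^sub>L Pmap B1))"
    by (simp add: divide_right_mono norm_sum)
  also have "\<dots> \<le> (1 / real N) * (\<Sum>i<N. ?K)"
    by (intro mult_left_mono sum_mono each) simp
  also have "\<dots> = ?K" using N by simp
  finally show ?thesis .
qed

lemma Lk_lip:
  fixes l :: "real^'n \<Rightarrow> real^'m \<Rightarrow> real^'d \<Rightarrow> real"
    and B1 :: "real^'d^'n" and B0 :: "real^'d" and x x' :: "real^'n" and y y' :: "real^'m"
  assumes lip: "C-lipschitz_on UNIV (\<lambda>(x, y, z). l x y z)" and N: "N > 0"
  shows "\<bar>Lk l N B1 B0 es x y - Lk l N B1 B0 es x' y'\<bar> \<le> C * ((1 + norm B1) * norm (x - x') + norm (y - y'))"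
proof -
  have C: "C \<ge> 0" using lip lipschitz_on_nonneg by blast
  let ?K = "C * ((1 + norm B1) * norm (x - x') + norm (y - y'))"
  have each: "\<bar>l x y (model B1 B0 x e) - l x' y' (model B1 B0 x' e)\<bar> \<le> ?K" for e
  proof -
    have "\<bar>l x y (model B1 B0 x e) - l x' y' (model B1 B0 x' e)\<bar> \<le> C * norm ((x, y, model B1 B0 x e) - (x', y', model B1 B0 x' e))"
      using lipschitz_onD[OF lip, of "(x, y, model B1 B0 x e)" "(x', y', model B1 B0 x' e)"] by (simp add: dist_norm dist_real_def)
    also have "\<dots> \<le> C * ((1 + norm B1) * norm (x - x') + norm (y - y'))"
    proof -
      have "norm ((x, y, model B1 B0 x e) - (x', y', model B1 B0 x' e)) = norm ((x - x', y - y', (x - x') v* B1))"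
        by (simp add: model_def vector_matrix_mult_diff_distrib)
      also have "\<dots> \<le> norm (x - x') + norm (y - y') + norm (x - x') * norm B1"
        using norm_triple[of "x - x'" "y - y'" "(x - x') v* B1"] norm_vm[of "x - x'" B1] by simp
      also have "\<dots> = (1 + norm B1) * norm (x - x') + norm (y - y')" by (simp add: algebra_simps)
      finally show ?thesis using C by (intro mult_left_mono) auto
    qed
    finally show ?thesis .
  qed
  have "Lk l N B1 B0 es x y - Lk l N B1 B0 es x' y' = (1 / real N) * (\<Sum>i<N. l x y (model B1 B0 x (es i)) - l x' y' (model B1 B0 x' (es i)))"
    by (simp add: Lk_def sum_subtractf right_diff_distrib)
  also have "\<bar>\<dots>\<bar> \<le> (1 / real N) * (\<Sum>i<N. \<bar>l x y (model B1 B0 x (es i)) - l x' y' (model B1 B0 x' (es i))\<bar>)"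
    by (simp add: abs_mult divide_right_mono sum_abs)
  also have "\<dots> \<le> (1 / real N) * (\<Sum>i<N. ?K)"
    by (intro mult_left_mono sum_mono each) simp
  also have "\<dots> = ?K" using N by simp
  finally show ?thesis .
qed

lemma danskin:
  fixes F :: "'a::euclidean_space \<Rightarrow> 'b::real_normed_vector \<Rightarrow> real"
    and DF :: "'a \<Rightarrow> 'b \<Rightarrow> 'a \<Rightarrow>\<^sub>L real" and ys :: "'a \<Rightarrow> 'b"
  assumes der: "\<And>x y. y \<in> Y \<Longrightarrow> ((\<lambda>u. F u y) has_derivative DF x y) (at x)"
    and lx: "\<And>x x' y. y\<in>Y \<Longrightarrow> norm (DF x y - DF x' y) \<le> c * norm (x - x')"
    and ly: "\<And>x y y'. y\<in>Y \<Longrightarrow> y'\<in>Y \<Longrightarrow> norm (DF x y - DF x y') \<le> a * norm (y - y')"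
    and lf: "\<And>x x' y. y\<in>Y \<Longrightarrow> \<bar>F x y - F x' y\<bar> \<le> b * norm (x - x')"
    and ysY: "\<And>x. ys x \<in> Y"
    and grow: "\<And>x y. y\<in>Y \<Longrightarrow> F x y + m * (norm (y - ys x))\<^sup>2 \<le> F x (ys x)"
    and pos: "m > 0" "c \<ge> 0" "a \<ge> 0" "b \<ge> 0"
  shows "((\<lambda>x. F x (ys x)) has_derivative DF x0 (ys x0)) (at x0)"
proof -
  have taylor: "\<bar>F (x0+h) y - F x0 y - DF x0 y h\<bar> \<le> c * (norm h)\<^sup>2" if y: "y \<in> Y" for h y
  proof -
    have "norm (F (x0+h) y - F x0 y - blinfun_apply (DF x0 y) ((x0+h) - x0)) \<le> norm ((x0+h) - x0) * (c * norm h)"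
    proof (rule differentiable_bound_linearization[where S="cball x0 (norm h)"])
      fix t :: real assume "t \<in> {0..1}"
      then show "x0 + t *\<^sub>R (x0 + h - x0) \<in> cball x0 (norm h)"
        by (auto simp: dist_norm intro!: mult_left_le_one_le)
    next
      fix x assume "x \<in> cball x0 (norm h)"
      show "((\<lambda>u. F u y) has_derivative blinfun_apply (DF x y)) (at x within cball x0 (norm h))"
        using der[OF y] by (rule has_derivative_at_withinI)
    next
      fix x assume x: "x \<in> cball x0 (norm h)"
      have "onorm (blinfun_apply (DF x y) - blinfun_apply (DF x0 y)) = norm (DF x y - DF x0 y)"
      proof -
        have "blinfun_apply (DF x y - DF x0 y) = blinfun_apply (DF x y) - blinfun_apply (DF x0 y)"
          by (rule ext) (simp add: blinfun.diff_left)
        then show ?thesis by (simp add: norm_blinfun.rep_eq)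
      qed
      also have "\<dots> \<le> c * norm (x - x0)" by (rule lx[OF y])
      also have "\<dots> \<le> c * norm h" using x pos by (auto intro!: mult_left_mono simp: dist_norm norm_minus_commute)
      finally show "onorm (blinfun_apply (DF x y) - blinfun_apply (DF x0 y)) \<le> c * norm h" .
    qed simp
    then show ?thesis by (simp add: power2_eq_square mult_ac)
  qed
  define y0 where "y0 = ys x0"
  have yd: "m * (norm (ys (x0+h) - y0))\<^sup>2 \<le> b * norm h" for h
  proof -
    have 1: "F (x0+h) y0 + m * (norm (y0 - ys (x0+h)))\<^sup>2 \<le> F (x0+h) (ys (x0+h))"
      using grow[of y0 "x0+h"] ysY y0_def by simp
    have 2: "F x0 (ys (x0+h)) + m * (norm (ys (x0+h) - y0))\<^sup>2 \<le> F x0 y0"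
      using grow[of "ys (x0+h)" x0] ysY y0_def by simp
    have 3: "\<bar>F (x0+h) y0 - F x0 y0\<bar> \<le> b * norm h" using lf[of y0 "x0+h" x0] ysY y0_def by simp
    have 4: "\<bar>F (x0+h) (ys (x0+h)) - F x0 (ys (x0+h))\<bar> \<le> b * norm h" using lf[of "ys (x0+h)" "x0+h" x0] ysY by simp
    have "norm (y0 - ys (x0+h)) = norm (ys (x0+h) - y0)" by (rule norm_minus_commute)
    with 1 2 3 4 show ?thesis by (simp add: abs_le_iff)
  qed
  have err: "\<bar>F (x0+h) (ys (x0+h)) - F x0 y0 - DF x0 y0 h\<bar> \<le> c * (norm h)\<^sup>2 + a * sqrt (b / m * norm h) * norm h" for h
  proof -
    let ?y1 = "ys (x0+h)"
    have y1Y: "?y1 \<in> Y" and y0Y: "y0 \<in> Y" using ysY y0_def by auto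
    have nn: "0 \<le> m * (norm z)\<^sup>2" for z :: 'b using pos by simp
    have lo: "F (x0+h) y0 \<le> F (x0+h) ?y1" using grow[OF y0Y, of "x0+h"] nn[of "y0 - ys (x0+h)"]
      by linarith
    have hi: "F x0 ?y1 \<le> F x0 y0" using grow[OF y1Y, of x0] nn[of "ys (x0+h) - ys x0"] y0_def
      by simp
    have t0: "\<bar>F (x0+h) y0 - F x0 y0 - DF x0 y0 h\<bar> \<le> c * (norm h)\<^sup>2" by (rule taylor[OF y0Y])
    have t1: "\<bar>F (x0+h) ?y1 - F x0 ?y1 - DF x0 ?y1 h\<bar> \<le> c * (norm h)\<^sup>2" by (rule taylor[OF y1Y])
    have dsq: "(norm (?y1 - y0))\<^sup>2 \<le> b / m * norm h" using yd[of h] pos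
      by (simp add: field_simps)
    have dn: "norm (?y1 - y0) \<le> sqrt (b / m * norm h)"
      using real_le_rsqrt[OF dsq] .
    have "\<bar>DF x0 ?y1 h - DF x0 y0 h\<bar> = norm (blinfun_apply (DF x0 ?y1 - DF x0 y0) h)"
      by (simp add: blinfun.diff_left)
    also have "\<dots> \<le> norm (DF x0 ?y1 - DF x0 y0) * norm h" by (rule norm_blinfun)
    also have "\<dots> \<le> a * norm (?y1 - y0) * norm h"
      by (rule mult_right_mono[OF ly[OF y1Y y0Y]]) simp
    also have "\<dots> \<le> a * sqrt (b / m * norm h) * norm h"
      using dn pos by (intro mult_right_mono mult_left_mono) auto
    finally have dd: "\<bar>DF x0 ?y1 h - DF x0 y0 h\<bar> \<le> a * sqrt (b / m * norm h) * norm h" .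
    show ?thesis using lo hi t0 t1 dd by (simp add: abs_le_iff)
  qed
  show ?thesis
    unfolding has_derivative_at
  proof
    show "bounded_linear (blinfun_apply (DF x0 (ys x0)))" by (rule blinfun.bounded_linear_right)
    have lim: "((\<lambda>h. c * norm h + a * sqrt (b / m * norm h)) \<longlongrightarrow> 0) (at (0::'a))"
    proof -
      have "((\<lambda>h. c * norm h + a * sqrt (b / m * norm h)) \<longlongrightarrow> c * norm (0::'a) + a * sqrt (b / m * norm (0::'a))) (at (0::'a))"
        by (intro tendsto_intros)
      then show ?thesis by simp
    qed
    show "(\<lambda>h. norm (F (x0 + h) (ys (x0 + h)) - F x0 (ys x0) - blinfun_apply (DF x0 (ys x0)) h) / norm h) \<midarrow>0\<rightarrow> 0"
    proof (rule Lim_null_comparison[OF _ lim])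
      show "\<forall>\<^sub>F h in at 0. norm (norm (F (x0 + h) (ys (x0 + h)) - F x0 (ys x0) - blinfun_apply (DF x0 (ys x0)) h) / norm h)
          \<le> c * norm h + a * sqrt (b / m * norm h)"
      proof (rule always_eventually, rule allI)
        fix h :: 'a
        show "norm (norm (F (x0 + h) (ys (x0 + h)) - F x0 (ys x0) - blinfun_apply (DF x0 (ys x0)) h) / norm h)
          \<le> c * norm h + a * sqrt (b / m * norm h)"
        proof (cases "h = 0")
          case True then show ?thesis using pos by simp
        next
          case False
          then have hp: "norm h > 0" by simp
          have "norm (norm (F (x0 + h) (ys (x0 + h)) - F x0 (ys x0) - blinfun_apply (DF x0 (ys x0)) h) / norm h)
              = \<bar>F (x0+h) (ys (x0+h)) - F x0 y0 - DF x0 y0 h\<bar> / norm h" by (simp add: y0_def)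
          also have "\<dots> \<le> (c * (norm h)\<^sup>2 + a * sqrt (b / m * norm h) * norm h) / norm h"
            using err[of h] hp by (simp add: divide_right_mono)
          also have "\<dots> = c * norm h + a * sqrt (b / m * norm h)" using hp
            by (simp add: field_simps power2_eq_square)
          finally show ?thesis .
        qed
      qed
    qed
  qed
qed

lemma sc_avg:
  assumes sc: "\<And>i. strongly_concave_on \<mu> Y (g i)" and N: "N > 0"
  shows "strongly_concave_on \<mu> Y (\<lambda>y. (1 / real N) * (\<Sum>i<N. g i y))"
  unfolding strongly_concave_on_def
proof (intro ballI)
  fix u v t assume uv: "u \<in> Y" "v \<in> Y" "t \<in> {0..(1::real)}"
  have "(\<Sum>i<N. t * g i u + (1 - t) * g i v + \<mu> / 2 * t * (1 - t) * (norm (u - v))\<^sup>2)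
        \<le> (\<Sum>i<N. g i (t *\<^sub>R u + (1 - t) *\<^sub>R v))"
    using sc uv unfolding strongly_concave_on_def by (intro sum_mono) blast
  then have "t * (\<Sum>i<N. g i u) + (1 - t) * (\<Sum>i<N. g i v) + real N * (\<mu> / 2 * t * (1 - t) * (norm (u - v))\<^sup>2)
        \<le> (\<Sum>i<N. g i (t *\<^sub>R u + (1 - t) *\<^sub>R v))"
    by (simp add: sum.distrib sum_distrib_left)
  then have "(1 / real N) * (t * (\<Sum>i<N. g i u) + (1 - t) * (\<Sum>i<N. g i v) + real N * (\<mu> / 2 * t * (1 - t) * (norm (u - v))\<^sup>2))
        \<le> (1 / real N) * (\<Sum>i<N. g i (t *\<^sub>R u + (1 - t) *\<^sub>R v))"
    using N by (intro mult_left_mono) auto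
  then show "t * ((1 / real N) * (\<Sum>i<N. g i u)) + (1 - t) * ((1 / real N) * (\<Sum>i<N. g i v)) + \<mu> / 2 * t * (1 - t) * (norm (u - v))\<^sup>2
        \<le> (1 / real N) * (\<Sum>i<N. g i (t *\<^sub>R u + (1 - t) *\<^sub>R v))"
    using N by (simp add: field_simps)
qed

lemma argmax_props:
  fixes f :: "'b::real_normed_vector \<Rightarrow> real"
  assumes sc: "strongly_concave_on \<mu> Y f" and mu: "\<mu> > 0" and cv: "convex Y" and cp: "compact Y"
    and ne: "Y \<noteq> {}" and ct: "continuous_on Y f"
  shows "argmax_on f Y \<in> Y \<and> (\<forall>y\<in>Y. f y + \<mu>/4 * (norm (y - argmax_on f Y))\<^sup>2 \<le> f (argmax_on f Y))"
proof -
  obtain ys where ys: "ys \<in> Y" "\<And>y. y \<in> Y \<Longrightarrow> f y \<le> f ys"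
    using continuous_attains_sup[OF cp ne ct] by blast
  have grow: "f y + \<mu>/4 * (norm (y - ys))\<^sup>2 \<le> f ys" if y: "y \<in> Y" for y
  proof -
    have "(1/2) *\<^sub>R ys + (1 - 1/2) *\<^sub>R y \<in> Y" using cv ys(1) y by (rule convexD) auto
    then have "f ((1/2) *\<^sub>R ys + (1 - 1/2) *\<^sub>R y) \<le> f ys" by (rule ys(2))
    moreover have "f ((1/2) *\<^sub>R ys + (1 - 1/2) *\<^sub>R y) \<ge> 1/2 * f ys + (1 - 1/2) * f y + \<mu> / 2 * (1/2) * (1 - 1/2) * (norm (ys - y))\<^sup>2"
    proof -
      have "1/2 \<in> {0..(1::real)}" by simp
      then show ?thesis using sc ys(1) y unfolding strongly_concave_on_def by blast
    qed
    moreover have "norm (ys - y) = norm (y - ys)" by (rule norm_minus_commute)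
    ultimately show ?thesis by simp
  qed
  have eq: "argmax_on f Y = ys"
    unfolding argmax_on_def
  proof (rule the_equality)
    show "ys \<in> Y \<and> (\<forall>y'\<in>Y. f y' \<le> f ys)" using ys by auto
  next
    fix z assume z: "z \<in> Y \<and> (\<forall>y'\<in>Y. f y' \<le> f z)"
    then have "f ys \<le> f z" using ys by auto
    with grow[of z] z have "\<mu>/4 * (norm (z - ys))\<^sup>2 \<le> 0" by auto
    with mu have "(norm (z - ys))\<^sup>2 \<le> 0" by (simp add: mult_le_0_iff)
    then show "z = ys" by simp
  qed
  show ?thesis using eq ys grow by auto
qed

definition gv :: "('a::euclidean_space \<Rightarrow>\<^sub>L real) \<Rightarrow> 'a" where
  "gv D = (\<Sum>b\<in>Basis. D b *\<^sub>R b)"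

lemma gv_inner: "gv D \<bullet> h = blinfun_apply D h"
proof -
  have "blinfun_apply D h = blinfun_apply D (\<Sum>b\<in>Basis. (h \<bullet> b) *\<^sub>R b)" by (simp add: euclidean_representation)
  also have "\<dots> = (\<Sum>b\<in>Basis. (h \<bullet> b) * D b)" by (simp add: blinfun.sum_right blinfun.scaleR_right)
  also have "\<dots> = gv D \<bullet> h" unfolding gv_def inner_sum_left by (simp add: inner_commute mult.commute)
  finally show ?thesis by simp
qed

lemma grad_eq:
  assumes "(f has_derivative blinfun_apply D) (at x)"
  shows "grad f x = gv D"
  unfolding grad_def
proof (rule the_equality)
  have "(\<lambda>h. gv D \<bullet> h) = blinfun_apply D" by (rule ext) (simp add: gv_inner)
  then show "(f has_derivative (\<lambda>h. gv D \<bullet> h)) (at x)" using assms by simp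
next
  fix g assume g: "(f has_derivative (\<lambda>h. g \<bullet> h)) (at x)"
  have "(\<lambda>h. g \<bullet> h) = blinfun_apply D" using has_derivative_unique[OF g assms] .
  then have "g \<bullet> (g - gv D) = gv D \<bullet> (g - gv D)" by (metis gv_inner)
  then have "(g - gv D) \<bullet> (g - gv D) = 0" by (simp add: inner_diff_left)
  then show "g = gv D" by simp
qed

lemma gv_diff_norm: "norm (gv D1 - gv D2) \<le> norm (D1 - D2)"
proof -
  let ?v = "gv D1 - gv D2"
  have "?v \<bullet> ?v = blinfun_apply (D1 - D2) ?v" by (simp add: inner_diff_left gv_inner blinfun.diff_left)
  also have "\<dots> \<le> norm (blinfun_apply (D1 - D2) ?v)" by simp
  also have "\<dots> \<le> norm (D1 - D2) * norm ?v" by (rule norm_blinfun)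
  finally have "(norm ?v)\<^sup>2 \<le> norm (D1 - D2) * norm ?v" by (simp add: power2_norm_eq_inner)
  then show ?thesis
    by (cases "norm ?v = 0") (auto simp: power2_eq_square mult_le_cancel_right)
qed

lemma ident_aux: "M > 0 \<Longrightarrow> (k::real) > 0 \<Longrightarrow> S = 8 * e + 2 * d * k \<Longrightarrow> e > 0 \<Longrightarrow> d > 0 \<Longrightarrow>
  (4 * e + 2 * k * d) * x * (G / ((S / k) * M)) - k * G * x / M = - (4 * k * e / (S * M)) * G * x"
proof -
  assume a: "M > 0" "(k::real) > 0" "S = 8 * e + 2 * d * k" "e > 0" "d > 0"
  then have Sp: "S > 0" by (simp add: add_pos_pos)
  have "(4 * e + 2 * k * d) * x * (G / ((S / k) * M)) - k * G * x / M
      = ((4 * e + 2 * k * d) * x * G * k) / (S * M) - (S * k * G * x) / (S * M)"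
    using a(1,2) Sp by (simp add: field_simps)
  also have "\<dots> = ((4 * e + 2 * k * d) * x * G * k - S * k * G * x) / (S * M)"
    by (rule diff_divide_distrib[symmetric])
  also have "(4 * e + 2 * k * d) * x * G * k - S * k * G * x = - (4 * k * e) * G * x" using a(3) by (simp add: algebra_simps)
  also have "- (4 * k * e) * G * x / (S * M) = - (4 * k * e / (S * M)) * G * x" by simp
  finally show ?thesis .
qed

theorem lemma4:
  fixes l :: "real^'n \<Rightarrow> real^'m \<Rightarrow> real^'d \<Rightarrow> real"
    and \<psi> :: "real^'n \<Rightarrow> real^'d"
    and Y :: "(real^'m) set"
    and E :: "(real^'d) measure"
    and ell1 L\<^sub>1 ell0 L\<^sub>0 \<mu> :: real
    and N :: nat and xs :: "nat \<Rightarrow> real^'n" and eps :: "nat \<Rightarrow> real^'d"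
    and B1 :: "real^'d^'n" and B0 :: "real^'d" and B :: real
    and xk :: "real^'n" and \<delta> \<delta>max \<kappa>dcp \<kappa>ef \<kappa>ed :: real
    and yi :: "real^'n \<Rightarrow> real^'m" and s :: "real^'n"
  defines "\<Phi> \<equiv> Phi_of (Lexp l \<psi> E) Y"
    and "L\<^sub>k \<equiv> Lk l N B1 B0 (\<lambda>i. \<psi> (xs i) + eps i - xs i v* B1 - B0)"
    and "\<Phi>\<^sub>k \<equiv> Phi_of (Lk l N B1 B0 (\<lambda>i. \<psi> (xs i) + eps i - xs i v* B1 - B0)) Y"
    and "ystar \<equiv> (\<lambda>x. argmax_on (Lk l N B1 B0 (\<lambda>i. \<psi> (xs i) + eps i - xs i v* B1 - B0) x) Y)"
    and "ellhat \<equiv> ell1 * (1 + B)\<^sup>2"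
  assumes l_smooth: "smooth_fun ell1 (\<lambda>(x, y, z). l x y z)"
    and l_lip: "L\<^sub>1-lipschitz_on UNIV (\<lambda>(x, y, z). l x y z)"
    and ell1_pos: "ell1 > 0" and L\<^sub>1_pos: "L\<^sub>1 > 0"
    and psi_twice: "twice_diff \<psi>"
    and psi_smooth: "smooth_fun ell0 \<psi>"
    and psi_lip: "L\<^sub>0-lipschitz_on UNIV \<psi>"
    and Y_ne: "Y \<noteq> {}" and Y_closed: "closed Y" and Y_convex: "convex Y" and Y_bounded: "bounded Y"
    and \<mu>_pos: "\<mu> > 0"
    and l_sc: "\<And>x z. strongly_concave_on \<mu> Y (\<lambda>y. l x y z)"
    and E_prob: "prob_space E" and E_sets: "sets E = sets borel"
    and E_supp: "\<exists>K. compact K \<and> (AE e in E. e \<in> K)"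
    and E_mean: "integrable E (\<lambda>e. e)" "(\<integral>e. e \<partial>E) = 0"
    and \<Phi>_diff: "\<And>x. \<Phi> differentiable (at x)"
    and N_pos: "N > 0"
    and xs_ball: "\<And>i. i < N \<Longrightarrow> xs i \<in> cball xk \<delta>"
    and LS: "\<And>C1 C0. ls_obj N xs (\<lambda>i. \<psi> (xs i) + eps i) B1 B0 \<le> ls_obj N xs (\<lambda>i. \<psi> (xs i) + eps i) C1 C0"
    and B1_bound: "norm B1 \<le> B"
    and \<delta>_pos: "0 < \<delta>" and \<delta>_max: "\<delta> \<le> \<delta>max"
    and \<kappa>_pos: "\<kappa>dcp > 0" "\<kappa>ef > 0" "\<kappa>ed > 0"
    and yi_Y: "\<And>x. x \<in> cball xk \<delta> \<Longrightarrow> yi x \<in> Y"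
    and yi_close: "\<And>x. x \<in> cball xk \<delta> \<Longrightarrow>
        norm (yi x - ystar x) \<le> min (\<kappa>ed * \<delta> / ellhat) (\<kappa>ef * \<delta>\<^sup>2 / L\<^sub>1)"
    and s_norm: "norm s \<le> \<delta>"
    and decrease: "L\<^sub>k xk (yi xk) - L\<^sub>k (xk + s) (yi (xk + s)) \<ge> \<kappa>dcp * norm (grad (\<lambda>x. L\<^sub>k x (yi xk)) xk) * min \<delta> 1"
    and acc_f: "\<And>x. x \<in> cball xk \<delta> \<Longrightarrow> \<bar>\<Phi> x - \<Phi>\<^sub>k x\<bar> \<le> \<kappa>ef * \<delta>\<^sup>2"
    and acc_g: "norm (grad \<Phi> xk) - norm (grad \<Phi>\<^sub>k xk) \<le> \<kappa>ed * \<delta>"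
    and \<delta>_small: "\<delta> \<le> norm (grad \<Phi> xk) / ((8 * \<kappa>ef / \<kappa>dcp + 2 * \<kappa>ed) * max 1 \<delta>max)"
  shows "\<Phi> (xk + s) - \<Phi> xk \<le>
    - (4 * \<kappa>dcp * \<kappa>ef / ((8 * \<kappa>ef + 2 * \<kappa>ed * \<kappa>dcp) * max \<delta>max 1)) * norm (grad \<Phi> xk) * \<delta>"
  proof -
  define es where "es = (\<lambda>i. \<psi> (xs i) + eps i - xs i v* B1 - B0)"
  have Lk_eq: "L\<^sub>k = Lk l N B1 B0 es" unfolding L\<^sub>k_def es_def ..
  have Phik_eq: "\<Phi>\<^sub>k = Phi_of L\<^sub>k Y" unfolding \<Phi>\<^sub>k_def L\<^sub>k_def ..
  have ystar_eq: "ystar = (\<lambda>x. argmax_on (L\<^sub>k x) Y)" unfolding ystar_def L\<^sub>k_def ..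
  obtain D where Dder: "\<And>z. ((\<lambda>(x, y, z). l x y z) has_derivative blinfun_apply (D z)) (at z)"
    and Dlip: "ell1-lipschitz_on UNIV D"
    using l_smooth unfolding smooth_fun_def by blast
  have B0le: "0 \<le> norm B1" by simp
  have Bge: "norm B1 \<le> B" by (rule B1_bound)
  have Bnn: "B \<ge> 0" using B0le Bge by linarith
  have Lkx: "\<bar>L\<^sub>k x y - L\<^sub>k x' y\<bar> \<le> L\<^sub>1 * (1 + norm B1) * norm (x - x')" for x x' y
    using Lk_lip[OF l_lip N_pos, of B1 B0 es x y x' y] unfolding Lk_eq by (simp add: mult_ac)
  have Lky: "\<bar>L\<^sub>k x y - L\<^sub>k x y'\<bar> \<le> L\<^sub>1 * norm (y - y')" for x y y'
    using Lk_lip[OF l_lip N_pos, of B1 B0 es x y x y'] unfolding Lk_eq by simp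
  have cont: "continuous_on Y (L\<^sub>k x)" for x
  proof (rule lipschitz_on_continuous_on)
    show "L\<^sub>1-lipschitz_on Y (L\<^sub>k x)"
      by (rule lipschitz_onI) (use Lky L\<^sub>1_pos in \<open>auto simp: dist_norm dist_real_def\<close>)
  qed
  have cpY: "compact Y" using Y_closed Y_bounded by (simp add: compact_eq_bounded_closed)
  have scLk: "strongly_concave_on \<mu> Y (L\<^sub>k x)" for x
  proof -
    have e: "L\<^sub>k x = (\<lambda>y. (1 / real N) * (\<Sum>i<N. (\<lambda>i y. l x y (model B1 B0 x (es i))) i y))"
      unfolding Lk_eq by (rule ext) (simp add: Lk_def)
    have "strongly_concave_on \<mu> Y (\<lambda>y. (1 / real N) * (\<Sum>i<N. (\<lambda>i y. l x y (model B1 B0 x (es i))) i y))"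
      by (rule sc_avg[OF _ N_pos]) (use l_sc in simp)
    then show ?thesis by (subst e)
  qed
  have arg: "ystar x \<in> Y \<and> (\<forall>y\<in>Y. L\<^sub>k x y + \<mu>/4 * (norm (y - ystar x))\<^sup>2 \<le> L\<^sub>k x (ystar x))" for x
    unfolding ystar_eq using argmax_props[OF scLk \<mu>_pos Y_convex cpY Y_ne cont] by simp
  have Phik_val: "\<Phi>\<^sub>k x = L\<^sub>k x (ystar x)" for x
  proof -
    have "Sup (L\<^sub>k x ` Y) = L\<^sub>k x (ystar x)"
    proof (rule cSup_eq_maximum)
      show "L\<^sub>k x (ystar x) \<in> L\<^sub>k x ` Y" using arg[of x] by blast
    next
      fix v assume "v \<in> L\<^sub>k x ` Y"
      then obtain y where y: "y \<in> Y" "v = L\<^sub>k x y" by blast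
      have "0 \<le> \<mu>/4 * (norm (y - ystar x))\<^sup>2" using \<mu>_pos by simp
      then show "v \<le> L\<^sub>k x (ystar x)" using arg[of x] y by fastforce
    qed
    then show ?thesis unfolding Phik_eq Phi_of_def by simp
  qed
  have Phik_fun: "\<Phi>\<^sub>k = (\<lambda>x. L\<^sub>k x (ystar x))" using Phik_val by (rule ext)
  let ?DL = "DLk D N B1 B0 es"
  have DLder: "((\<lambda>u. L\<^sub>k u y) has_derivative blinfun_apply (?DL x y)) (at x)" for x y
    unfolding Lk_eq by (rule DLk_deriv[OF Dder])
  have DLl: "norm (?DL x y - ?DL x' y') \<le> ell1 * (1 + norm B1) * ((1 + norm B1) * norm (x - x') + norm (y - y'))" for x x' y y'
    by (rule DLk_lip[OF Dlip N_pos])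
  have dk: "(\<Phi>\<^sub>k has_derivative blinfun_apply (?DL xk (ystar xk))) (at xk)"
    unfolding Phik_fun
  proof (rule danskin[where Y=Y and c="ell1 * (1 + norm B1) * (1 + norm B1)" and a="ell1 * (1 + norm B1)"
        and b="L\<^sub>1 * (1 + norm B1)" and m="\<mu>/4"])
    show "((\<lambda>u. L\<^sub>k u y) has_derivative blinfun_apply (?DL x y)) (at x)" for x y by (rule DLder)
    show "norm (?DL x y - ?DL x' y) \<le> ell1 * (1 + norm B1) * (1 + norm B1) * norm (x - x')" for x x' y
      using DLl[of x y x' y] by (simp add: mult_ac)
    show "norm (?DL x y - ?DL x y') \<le> ell1 * (1 + norm B1) * norm (y - y')" for x y y'
      using DLl[of x y x y'] by simp
    show "\<bar>L\<^sub>k x y - L\<^sub>k x' y\<bar> \<le> L\<^sub>1 * (1 + norm B1) * norm (x - x')" for x x' y by (rule Lkx)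
    show "ystar x \<in> Y" for x using arg by blast
    show "L\<^sub>k x y + \<mu> / 4 * (norm (y - ystar x))\<^sup>2 \<le> L\<^sub>k x (ystar x)" if "y \<in> Y" for x y using arg that by blast
  qed (use \<mu>_pos ell1_pos L\<^sub>1_pos in auto)
  have gPk: "grad \<Phi>\<^sub>k xk = gv (?DL xk (ystar xk))" by (rule grad_eq[OF dk])
  have gk: "grad (\<lambda>x. L\<^sub>k x (yi xk)) xk = gv (?DL xk (yi xk))" by (rule grad_eq[OF DLder])
  have xk_in: "xk \<in> cball xk \<delta>" using \<delta>_pos by simp
  have xks_in: "xk + s \<in> cball xk \<delta>" using s_norm by (simp add: dist_norm)
  have ellhat_pos: "ellhat > 0" unfolding ellhat_def using ell1_pos Bnn by (simp add: add_pos_nonneg)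
  have ysd: "norm (yi x - ystar x) \<le> \<kappa>ed * \<delta> / ellhat" "norm (yi x - ystar x) \<le> \<kappa>ef * \<delta>\<^sup>2 / L\<^sub>1"
    if "x \<in> cball xk \<delta>" for x using yi_close[OF that] by auto
  have gradgap: "norm (grad \<Phi>\<^sub>k xk) - norm (grad (\<lambda>x. L\<^sub>k x (yi xk)) xk) \<le> \<kappa>ed * \<delta>"
  proof -
    have "norm (grad \<Phi>\<^sub>k xk) - norm (grad (\<lambda>x. L\<^sub>k x (yi xk)) xk) \<le> norm (gv (?DL xk (ystar xk)) - gv (?DL xk (yi xk)))"
      unfolding gPk gk by (rule norm_triangle_ineq2)
    also have "\<dots> \<le> norm (?DL xk (ystar xk) - ?DL xk (yi xk))" by (rule gv_diff_norm)
    also have "\<dots> \<le> ell1 * (1 + norm B1) * norm (yi xk - ystar xk)"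
      using DLl[of xk "ystar xk" xk "yi xk"] by (simp add: norm_minus_commute)
    also have "\<dots> \<le> ellhat * norm (yi xk - ystar xk)"
    proof (rule mult_right_mono)
      have "1 + norm B1 \<le> 1 + B" using Bge by simp
      also have "\<dots> \<le> (1 + B)\<^sup>2" using Bnn by (simp add: power2_eq_square)
      finally show "ell1 * (1 + norm B1) \<le> ellhat" unfolding ellhat_def using ell1_pos by simp
    qed simp
    also have "\<dots> \<le> ellhat * (\<kappa>ed * \<delta> / ellhat)" using ysd(1)[OF xk_in] ellhat_pos by (intro mult_left_mono) auto
    also have "\<dots> = \<kappa>ed * \<delta>" using ellhat_pos by simp
    finally show ?thesis .
  qed
  have v1: "\<Phi>\<^sub>k (xk + s) \<le> L\<^sub>k (xk + s) (yi (xk + s)) + \<kappa>ef * \<delta>\<^sup>2"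
  proof -
    have "\<Phi>\<^sub>k (xk + s) = L\<^sub>k (xk + s) (ystar (xk + s))" by (rule Phik_val)
    also have "\<dots> \<le> L\<^sub>k (xk + s) (yi (xk + s)) + L\<^sub>1 * norm (yi (xk + s) - ystar (xk + s))"
      using Lky[of "xk + s" "yi (xk + s)" "ystar (xk + s)"] by simp
    also have "L\<^sub>1 * norm (yi (xk + s) - ystar (xk + s)) \<le> L\<^sub>1 * (\<kappa>ef * \<delta>\<^sup>2 / L\<^sub>1)"
      using ysd(2)[OF xks_in] L\<^sub>1_pos by (intro mult_left_mono) auto
    also have "\<dots> = \<kappa>ef * \<delta>\<^sup>2" using L\<^sub>1_pos by simp
    finally show ?thesis by simp
  qed
  have v2: "L\<^sub>k xk (yi xk) \<le> \<Phi>\<^sub>k xk"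
  proof -
    have "0 \<le> \<mu>/4 * (norm (yi xk - ystar xk))\<^sup>2" using \<mu>_pos by simp
    then show ?thesis using arg[of xk] yi_Y[OF xk_in] Phik_val[of xk] by fastforce
  qed
  have a1: "\<Phi> (xk + s) \<le> \<Phi>\<^sub>k (xk + s) + \<kappa>ef * \<delta>\<^sup>2" using acc_f[OF xks_in] by (simp add: abs_le_iff)
  have a2: "\<Phi>\<^sub>k xk - \<kappa>ef * \<delta>\<^sup>2 \<le> \<Phi> xk" using acc_f[OF xk_in] by (simp add: abs_le_iff)
  define G where "G = norm (grad \<Phi> xk)"
  define gn where "gn = norm (grad (\<lambda>x. L\<^sub>k x (yi xk)) xk)"
  define M where "M = max 1 \<delta>max"
  define mn where "mn = min \<delta> 1"
  define A where "A = 8 * \<kappa>ef / \<kappa>dcp + 2 * \<kappa>ed"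
  have step1: "\<Phi> (xk + s) - \<Phi> xk \<le> 3 * \<kappa>ef * \<delta>\<^sup>2 - \<kappa>dcp * gn * mn"
    using v1 v2 a1 a2 decrease unfolding gn_def mn_def by simp
  have gnb: "gn \<ge> G - 2 * \<kappa>ed * \<delta>" using gradgap acc_g unfolding gn_def G_def by simp
  have M1: "M \<ge> 1" "\<delta> \<le> M" unfolding M_def using \<delta>_max by auto
  have Apos: "A > 0" unfolding A_def using \<kappa>_pos by (simp add: add_pos_pos)
  have dA: "\<delta> \<le> G / (A * M)" using \<delta>_small unfolding G_def A_def M_def by simp
  have dA': "\<delta> * (A * M) \<le> G" using dA Apos M1 by (simp add: field_simps)
  have mnb: "mn \<ge> \<delta> / M" unfolding mn_def using M1 \<delta>_pos by (auto simp: field_simps)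
  have Gnn: "G - 2 * \<kappa>ed * \<delta> \<ge> 0"
  proof -
    have "2 * \<kappa>ed * \<delta> \<le> \<delta> * A" unfolding A_def using \<kappa>_pos \<delta>_pos by (simp add: field_simps)
    also have "\<dots> \<le> \<delta> * (A * M)" using M1 Apos \<delta>_pos by (simp add: mult_le_cancel_left1)
    finally show ?thesis using dA' by simp
  qed
  have step2: "\<kappa>dcp * gn * mn \<ge> \<kappa>dcp * (G - 2 * \<kappa>ed * \<delta>) * (\<delta> / M)"
    using gnb mnb Gnn \<kappa>_pos \<delta>_pos M1 by (intro mult_mono) auto
  have step3: "3 * \<kappa>ef * \<delta>\<^sup>2 + 2 * \<kappa>dcp * \<kappa>ed * \<delta> * (\<delta> / M) \<le> (4 * \<kappa>ef + 2 * \<kappa>dcp * \<kappa>ed) * \<delta> * (G / (A * M))"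
  proof -
    have "\<delta> / M \<le> \<delta>" using M1 \<delta>_pos by (simp add: field_simps)
    then have "2 * \<kappa>dcp * \<kappa>ed * \<delta> * (\<delta> / M) \<le> 2 * \<kappa>dcp * \<kappa>ed * \<delta> * \<delta>"
      using \<kappa>_pos \<delta>_pos by (intro mult_left_mono) auto
    also have "\<dots> \<le> 2 * \<kappa>dcp * \<kappa>ed * \<delta> * (G / (A * M))"
      using dA \<kappa>_pos \<delta>_pos by (intro mult_left_mono) auto
    finally have x1: "2 * \<kappa>dcp * \<kappa>ed * \<delta> * (\<delta> / M) \<le> 2 * \<kappa>dcp * \<kappa>ed * \<delta> * (G / (A * M))" .
    have "3 * \<kappa>ef * \<delta>\<^sup>2 = 3 * \<kappa>ef * \<delta> * \<delta>" by (simp add: power2_eq_square)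
    also have "\<dots> \<le> 3 * \<kappa>ef * \<delta> * (G / (A * M))" using dA \<kappa>_pos \<delta>_pos by (intro mult_left_mono) auto
    also have "\<dots> \<le> 4 * \<kappa>ef * \<delta> * (G / (A * M))"
    proof (rule mult_right_mono)
      show "3 * \<kappa>ef * \<delta> \<le> 4 * \<kappa>ef * \<delta>" using \<kappa>_pos \<delta>_pos by simp
      show "0 \<le> G / (A * M)" using dA \<delta>_pos by linarith
    qed
    finally have x2: "3 * \<kappa>ef * \<delta>\<^sup>2 \<le> 4 * \<kappa>ef * \<delta> * (G / (A * M))" .
    show ?thesis using x1 x2 by (simp add: algebra_simps)
  qed
  have ident: "(4 * \<kappa>ef + 2 * \<kappa>dcp * \<kappa>ed) * \<delta> * (G / (A * M)) - \<kappa>dcp * G * \<delta> / M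
      = - (4 * \<kappa>dcp * \<kappa>ef / ((8 * \<kappa>ef + 2 * \<kappa>ed * \<kappa>dcp) * max \<delta>max 1)) * G * \<delta>"
  proof -
    have Md: "max \<delta>max 1 = M" unfolding M_def by (simp add: max.commute)
    have Ak: "A * \<kappa>dcp = 8 * \<kappa>ef + 2 * \<kappa>ed * \<kappa>dcp" unfolding A_def using \<kappa>_pos by (simp add: field_simps)
    have Mp: "M > 0" using M1 by simp
    have kp: "\<kappa>dcp > 0" using \<kappa>_pos by simp
    have Ae: "A = (8 * \<kappa>ef + 2 * \<kappa>ed * \<kappa>dcp) / \<kappa>dcp" using Ak kp by (simp add: field_simps)
    show ?thesis unfolding Md Ae
      by (rule ident_aux[OF Mp kp refl]) (use \<kappa>_pos in auto)
  qed
  have "\<Phi> (xk + s) - \<Phi> xk \<le> 3 * \<kappa>ef * \<delta>\<^sup>2 - \<kappa>dcp * (G - 2 * \<kappa>ed * \<delta>) * (\<delta> / M)"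
    using step1 step2 by simp
  also have "\<dots> = 3 * \<kappa>ef * \<delta>\<^sup>2 + 2 * \<kappa>dcp * \<kappa>ed * \<delta> * (\<delta> / M) - \<kappa>dcp * G * \<delta> / M"
    by (simp add: algebra_simps)
  also have "\<dots> \<le> (4 * \<kappa>ef + 2 * \<kappa>dcp * \<kappa>ed) * \<delta> * (G / (A * M)) - \<kappa>dcp * G * \<delta> / M"
    using step3 by simp
  also have "\<dots> = - (4 * \<kappa>dcp * \<kappa>ef / ((8 * \<kappa>ef + 2 * \<kappa>ed * \<kappa>dcp) * max \<delta>max 1)) * G * \<delta>" by (rule ident)
  finally show ?thesis unfolding G_def .
qed

end
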